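(* Let $\xi_1,\dots,\xi_n\ge0$ with $\sum_k\xi_k=1$, let $j\in[n]$, and let $\phi(z_1,\dots,z_n)=\frac{\exp(z_j)}{\sum_{k=1}^n\xi_k\exp(z_k)}$. Then the (multivariate) Taylor series of $\phi$ at the origin has radius of convergence at least $1$; in particular it converges to $\phi(z)$ for all $z\in\mathbb{R}^n$ with $\|z\|_\infty\le1$. *)

theory Defs
  imports "HOL-Analysis.Analysis"
begin

text \<open>Points of R^n are represented as functions nat => real, of which only the
  coordinates 0..n-1 are relevant. Multi-indices are functions nat => nat
  supported in {..<n}.\<close>

definition partial_deriv :: "nat \<Rightarrow> ((nat \<Rightarrow> real) \<Rightarrow> real) \<Rightarrow> (nat \<Rightarrow> real) \<Rightarrow> real" where
  "partial_deriv k f x = deriv (\<lambda>t. f (x(k := t))) (x k)"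

fun iter_partials :: "nat list \<Rightarrow> ((nat \<Rightarrow> real) \<Rightarrow> real) \<Rightarrow> (nat \<Rightarrow> real) \<Rightarrow> real" where
  "iter_partials [] f = f"
| "iter_partials (k # ks) f = partial_deriv k (iter_partials ks f)"

definition multi_index_list :: "nat \<Rightarrow> (nat \<Rightarrow> nat) \<Rightarrow> nat list" where
  "multi_index_list n \<alpha> = concat (map (\<lambda>k. replicate (\<alpha> k) k) [0..<n])"

definition multi_indices :: "nat \<Rightarrow> (nat \<Rightarrow> nat) set" where
  "multi_indices n = {\<alpha>. \<forall>k\<ge>n. \<alpha> k = 0}"

definition taylor_coeff :: "nat \<Rightarrow> ((nat \<Rightarrow> real) \<Rightarrow> real) \<Rightarrow> (nat \<Rightarrow> nat) \<Rightarrow> real" where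
  "taylor_coeff n f \<alpha> =
     iter_partials (multi_index_list n \<alpha>) f (\<lambda>_. 0) / (\<Prod>k<n. fact (\<alpha> k))"

definition monomial :: "nat \<Rightarrow> (nat \<Rightarrow> nat) \<Rightarrow> (nat \<Rightarrow> real) \<Rightarrow> real" where
  "monomial n \<alpha> z = (\<Prod>k<n. z k ^ \<alpha> k)"

end

theory Submission
  imports Defs "HOL-Library.FuncSet" "HOL-Complex_Analysis.Complex_Analysis"
begin


definition deg :: "nat \<Rightarrow> (nat \<Rightarrow> nat) \<Rightarrow> nat" where
  "deg n \<alpha> = (\<Sum>k<n. \<alpha> k)"

lemma geom_summable:
  fixes q :: real assumes q: "0 \<le> q" "q < 1"
  shows "(\<lambda>\<alpha>. q ^ deg n \<alpha>) summable_on multi_indices n"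
proof (rule nonneg_bdd_above_summable_on)
  show "\<And>\<alpha>. \<alpha> \<in> multi_indices n \<Longrightarrow> 0 \<le> q ^ deg n \<alpha>" using q by simp
  show "bdd_above (sum (\<lambda>\<alpha>. q ^ deg n \<alpha>) ` {F. F \<subseteq> multi_indices n \<and> finite F})"
  proof (rule bdd_aboveI2)
    fix F assume "F \<in> {F. F \<subseteq> multi_indices n \<and> finite F}"
    hence FM: "F \<subseteq> multi_indices n" and finF: "finite F" by auto
    define K where "K = Max (insert 0 ((\<lambda>(\<alpha>,k). \<alpha> k) ` (F \<times> {..<n})))"
    define B where "B = {\<alpha>::nat\<Rightarrow>nat. \<forall>k. (k \<in> {..<n} \<longrightarrow> \<alpha> k \<in> {..K}) \<and> (k \<notin> {..<n} \<longrightarrow> \<alpha> k = 0)}"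
    have finB: "finite B" unfolding B_def by (rule finite_set_of_finite_funs) auto
    have FB: "F \<subseteq> B"
    proof
      fix \<alpha> assume a: "\<alpha> \<in> F"
      have "\<alpha> k \<le> K" if "k < n" for k
        unfolding K_def using a that finF by (intro Max_ge) force+
      moreover have "\<alpha> k = 0" if "k \<ge> n" for k using a FM that by (auto simp: multi_indices_def)
      ultimately show "\<alpha> \<in> B" unfolding B_def by auto
    qed
    have "sum (\<lambda>\<alpha>. q ^ deg n \<alpha>) F \<le> sum (\<lambda>\<alpha>. q ^ deg n \<alpha>) B"
      by (rule sum_mono2[OF finB FB]) (use q in simp)
    also have "\<dots> = (\<Sum>\<alpha>\<in>B. \<Prod>k<n. q ^ \<alpha> k)"
      by (simp add: deg_def power_sum)
    also have "\<dots> = (\<Sum>g\<in>PiE {..<n} (\<lambda>_. {..K}). \<Prod>k<n. q ^ g k)"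
      by (rule sum.reindex_bij_witness[where i="\<lambda>g k. if k < n then g k else 0" and j="\<lambda>\<alpha>. restrict \<alpha> {..<n}"])
         (auto simp: B_def PiE_def extensional_def fun_eq_iff intro!: prod.cong)
    also have "\<dots> = (\<Prod>k<n. \<Sum>i\<le>K. q ^ i)"
      by (rule prod_sum_PiE[symmetric]) auto
    also have "\<dots> \<le> (\<Prod>k<n. 1 / (1 - q))"
    proof (rule prod_mono)
      fix k assume "k \<in> {..<n}"
      have "(\<Sum>i\<le>K. q ^ i) = (\<Sum>i<Suc K. q ^ i)" by (simp add: lessThan_Suc_atMost)
      also have "\<dots> = (1 - q ^ Suc K) / (1 - q)"
        using q by (subst sum_gp_strict) auto
      also have "\<dots> \<le> 1 / (1 - q)" using q by (intro divide_right_mono) auto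
      finally show "0 \<le> (\<Sum>i\<le>K. q ^ i) \<and> (\<Sum>i\<le>K. q ^ i) \<le> 1 / (1 - q)"
        using q by (auto intro: sum_nonneg)
    qed
    finally show "sum (\<lambda>\<alpha>. q ^ deg n \<alpha>) F \<le> (\<Prod>k<n. 1 / (1 - q))" .
  qed
qed

lemma fiber_has_sum:
  fixes F :: "'a \<Rightarrow> real"
  assumes "F summable_on A"
  shows "((\<lambda>i. infsum F {x\<in>A. p x = i}) has_sum infsum F A) UNIV"
proof -
  define B where "B i = {x\<in>A. p x = i}" for i
  have inj: "inj_on snd (Sigma UNIV B)" by (auto simp: B_def inj_on_def)
  have im: "snd ` Sigma UNIV B = A" by (force simp: B_def)
  have "(F has_sum infsum F A) A" using assms by simp
  hence "(F has_sum infsum F A) (snd ` Sigma UNIV B)" using im by simp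
  hence "((F \<circ> snd) has_sum infsum F A) (Sigma UNIV B)" using has_sum_reindex[OF inj] by blast
  hence "((\<lambda>i. infsum F (B i)) has_sum infsum F A) UNIV"
  proof (rule has_sum_Sigma')
    fix i
    have "F summable_on B i" by (rule summable_on_subset[OF assms]) (auto simp: B_def)
    thus "((\<lambda>y. (F \<circ> snd) (i, y)) has_sum infsum F (B i)) (B i)" by simp
  qed
  thus ?thesis by (simp add: B_def)
qed

definition PSb :: "nat \<Rightarrow> ((nat\<Rightarrow>nat)\<Rightarrow>real) \<Rightarrow> bool" where
  "PSb n b \<longleftrightarrow> (\<forall>r. 0 \<le> r \<and> r < 1 \<longrightarrow> (\<exists>C. \<forall>\<alpha>\<in>multi_indices n. \<bar>b \<alpha>\<bar> * r ^ deg n \<alpha> \<le> C))"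

definition PS :: "nat \<Rightarrow> ((nat\<Rightarrow>nat)\<Rightarrow>real) \<Rightarrow> ((nat\<Rightarrow>real)\<Rightarrow>real) \<Rightarrow> bool" where
  "PS n b f \<longleftrightarrow> PSb n b \<and>
     (\<forall>x. (\<forall>l<n. \<bar>x l\<bar> < 1) \<longrightarrow> ((\<lambda>\<alpha>. b \<alpha> * monomial n \<alpha> x) has_sum f x) (multi_indices n))"

lemma abs_monomial_le:
  assumes "\<And>l. l < n \<Longrightarrow> \<bar>x l\<bar> \<le> s"
  shows "\<bar>monomial n \<alpha> x\<bar> \<le> s ^ deg n \<alpha>"
proof -
  have "\<bar>monomial n \<alpha> x\<bar> = (\<Prod>l<n. \<bar>x l\<bar> ^ \<alpha> l)" by (simp add: monomial_def abs_prod power_abs)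
  also have "\<dots> \<le> (\<Prod>l<n. s ^ \<alpha> l)" by (intro prod_mono) (auto intro: power_mono assms)
  also have "\<dots> = s ^ deg n \<alpha>" by (simp add: deg_def power_sum)
  finally show ?thesis .
qed

lemma PSb_summable:
  assumes "PSb n b" "\<And>l. l < n \<Longrightarrow> \<bar>x l\<bar> < 1"
  shows "(\<lambda>\<alpha>. b \<alpha> * monomial n \<alpha> x) summable_on multi_indices n"
proof -
  define s where "s = Max (insert 0 ((\<lambda>l. \<bar>x l\<bar>) ` {..<n}))"
  have s0: "0 \<le> s" unfolding s_def by (intro Max_ge) auto
  have s1: "s < 1" unfolding s_def using assms(2) by (subst Max_less_iff) auto
  have xs: "\<bar>x l\<bar> \<le> s" if "l < n" for l unfolding s_def using that by (intro Max_ge) auto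
  define r where "r = (s + 1) / 2"
  have r: "0 < r" "r < 1" "s < r" using s0 s1 by (auto simp: r_def)
  have "\<exists>C. \<forall>\<alpha>\<in>multi_indices n. \<bar>b \<alpha>\<bar> * r ^ deg n \<alpha> \<le> C"
    using assms(1)[unfolded PSb_def, rule_format, of r] r by auto
  then obtain C where C: "\<And>\<alpha>. \<alpha> \<in> multi_indices n \<Longrightarrow> \<bar>b \<alpha>\<bar> * r ^ deg n \<alpha> \<le> C"
    by blast
  define q where "q = s / r"
  have q: "0 \<le> q" "q < 1" using r s0 by (auto simp: q_def)
  have "(\<lambda>\<alpha>. C * q ^ deg n \<alpha>) summable_on multi_indices n"
    by (intro summable_on_cmult_right geom_summable q)
  moreover have "\<bar>b \<alpha> * monomial n \<alpha> x\<bar> \<le> C * q ^ deg n \<alpha>" if "\<alpha> \<in> multi_indices n" for \<alpha>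
  proof -
    have "\<bar>b \<alpha> * monomial n \<alpha> x\<bar> \<le> \<bar>b \<alpha>\<bar> * s ^ deg n \<alpha>"
      unfolding abs_mult by (intro mult_left_mono abs_monomial_le xs) auto
    also have "\<dots> = (\<bar>b \<alpha>\<bar> * r ^ deg n \<alpha>) * q ^ deg n \<alpha>"
      using r by (simp add: q_def power_divide)
    also have "\<dots> \<le> C * q ^ deg n \<alpha>" using C[OF that] q by (intro mult_right_mono) auto
    finally show ?thesis .
  qed
  ultimately have "(\<lambda>\<alpha>. \<bar>b \<alpha> * monomial n \<alpha> x\<bar>) summable_on multi_indices n"
    by (rule summable_on_comparison_test) auto
  thus ?thesis using summable_on_iff_abs_summable_on_real[of "\<lambda>\<alpha>. b \<alpha> * monomial n \<alpha> x"] by simp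
qed

definition Dk :: "nat \<Rightarrow> ((nat\<Rightarrow>nat)\<Rightarrow>real) \<Rightarrow> (nat\<Rightarrow>nat) \<Rightarrow> real" where
  "Dk k b \<beta> = real (\<beta> k + 1) * b (\<beta>(k := \<beta> k + 1))"

lemma upd_eq: "(\<beta>::nat\<Rightarrow>nat)(k := \<beta> k + 1) = (\<lambda>l. \<beta> l + (if l = k then 1 else 0))"
  by (auto simp: fun_eq_iff)

lemma deg_upd: "k < n \<Longrightarrow> deg n (\<beta>(k := \<beta> k + 1)) = deg n \<beta> + 1"
  unfolding deg_def upd_eq by (simp add: sum.distrib)

lemma upd_mi: "k < n \<Longrightarrow> \<beta> \<in> multi_indices n \<Longrightarrow> \<beta>(k := \<beta> k + 1) \<in> multi_indices n"
  by (auto simp: multi_indices_def)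

lemma le_deg: "k < n \<Longrightarrow> \<beta> k \<le> deg n \<beta>"
  unfolding deg_def by (rule member_le_sum) auto

lemma n_pow_bound:
  fixes q :: real assumes "0 \<le> q" "q < 1"
  obtains K where "\<And>d. real (d + 1) * q ^ d \<le> K"
proof -
  have "(\<lambda>d. of_nat d * q ^ d) \<longlonglongrightarrow> 0" using assms by (intro powser_times_n_limit_0) auto
  hence "Bseq (\<lambda>d. of_nat d * q ^ d)" by (intro convergent_imp_Bseq convergentI)
  then obtain K where K: "\<And>d. norm (of_nat d * q ^ d) \<le> K" unfolding Bseq_def by blast
  have "real (d + 1) * q ^ d \<le> K + 1" for d
  proof -
    have "q ^ d \<le> 1" using assms by (intro power_le_one) auto
    moreover have "real d * q ^ d \<le> K" using K[of d] assms by simp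
    ultimately show ?thesis by (simp add: algebra_simps)
  qed
  thus ?thesis using that by blast
qed

lemma PSb_Dk:
  assumes "PSb n b" "k < n"
  shows "PSb n (Dk k b)"
  unfolding PSb_def
proof (intro allI impI)
  fix r :: real assume r: "0 \<le> r \<and> r < 1"
  define r' where "r' = (r + 1) / 2"
  have r': "0 < r'" "r' < 1" "r < r'" using r by (auto simp: r'_def)
  have "\<exists>C. \<forall>\<alpha>\<in>multi_indices n. \<bar>b \<alpha>\<bar> * r' ^ deg n \<alpha> \<le> C"
    using assms(1)[unfolded PSb_def, rule_format, of r'] r' by auto
  then obtain C where C: "\<And>\<alpha>. \<alpha> \<in> multi_indices n \<Longrightarrow> \<bar>b \<alpha>\<bar> * r' ^ deg n \<alpha> \<le> C"
    by blast
  define q where "q = r / r'"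
  have q: "0 \<le> q" "q < 1" using r r' by (auto simp: q_def)
  obtain K where K: "\<And>d. real (d + 1) * q ^ d \<le> K" using n_pow_bound[OF q] by blast
  show "\<exists>C'. \<forall>\<beta>\<in>multi_indices n. \<bar>Dk k b \<beta>\<bar> * r ^ deg n \<beta> \<le> C'"
  proof (intro exI ballI)
    fix \<beta> assume \<beta>: "\<beta> \<in> multi_indices n"
    define d where "d = deg n \<beta>"
    define \<beta>' where "\<beta>' = \<beta>(k := \<beta> k + 1)"
    have b': "\<beta>' \<in> multi_indices n" "deg n \<beta>' = d + 1"
      using upd_mi[OF assms(2) \<beta>] deg_upd[OF assms(2)] by (auto simp: \<beta>'_def d_def)
    have C0: "0 \<le> C" using C[OF b'(1)] r' by (smt (verit) mult_nonneg_nonneg zero_le_power abs_ge_zero)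
    have bb: "\<bar>b \<beta>'\<bar> \<le> C / r' ^ (d + 1)"
      using C[OF b'(1)] r' b'(2) by (simp add: field_simps)
    have "\<bar>Dk k b \<beta>\<bar> * r ^ d = real (\<beta> k + 1) * \<bar>b \<beta>'\<bar> * r ^ d"
      by (simp add: Dk_def \<beta>'_def abs_mult)
    also have "\<dots> \<le> real (d + 1) * (C / r' ^ (d + 1)) * r ^ d"
      using le_deg[OF assms(2), of \<beta>] bb r by (intro mult_right_mono mult_mono) (auto simp: d_def)
    also have "\<dots> = C / r' * (real (d + 1) * q ^ d)"
      using r' by (simp add: q_def power_divide field_simps)
    also have "\<dots> \<le> C / r' * K" using K[of d] C0 r' by (intro mult_left_mono) auto
    finally show "\<bar>Dk k b \<beta>\<bar> * r ^ deg n \<beta> \<le> C / r' * K" by (simp add: d_def)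
  qed
qed

lemma mono_split:
  assumes "k < n"
  shows "monomial n \<alpha> (x(k := t)) = t ^ \<alpha> k * (\<Prod>l\<in>{..<n}-{k}. x l ^ \<alpha> l)"
proof -
  have "monomial n \<alpha> (x(k := t)) = t ^ \<alpha> k * (\<Prod>l\<in>{..<n}-{k}. (x(k := t)) l ^ \<alpha> l)"
    unfolding monomial_def using assms by (subst prod.remove[of _ k]) auto
  also have "(\<Prod>l\<in>{..<n}-{k}. (x(k := t)) l ^ \<alpha> l) = (\<Prod>l\<in>{..<n}-{k}. x l ^ \<alpha> l)"
    by (intro prod.cong) auto
  finally show ?thesis .
qed

lemma PS_Dk:
  assumes PS: "PS n b f" and k: "k < n"
  shows "PS n (Dk k b) (partial_deriv k f)"
proof -
  have bnd: "PSb n b" and rep: "\<And>x. (\<forall>l<n. \<bar>x l\<bar> < 1) \<Longrightarrow> ((\<lambda>\<alpha>. b \<alpha> * monomial n \<alpha> x) has_sum f x) (multi_indices n)"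
    using PS unfolding PS_def by auto
  have bnd': "PSb n (Dk k b)" using PSb_Dk[OF bnd k] .
  define M where "M = multi_indices n"
  define up where "up \<beta> = \<beta>(k := \<beta> k + 1)" for \<beta> :: "nat \<Rightarrow> nat"
  have "((\<lambda>\<alpha>. Dk k b \<alpha> * monomial n \<alpha> x) has_sum partial_deriv k f x) (multi_indices n)"
    if x: "\<forall>l<n. \<bar>x l\<bar> < 1" for x
  proof -
    define t0 where "t0 = x k"
    have t0: "\<bar>t0\<bar> < 1" using x k by (auto simp: t0_def)
    define w where "w \<alpha> = (\<Prod>l\<in>{..<n}-{k}. x l ^ \<alpha> l)" for \<alpha> :: "nat \<Rightarrow> nat"
    define c where "c i = infsum (\<lambda>\<alpha>. b \<alpha> * w \<alpha>) {\<alpha>\<in>M. \<alpha> k = i}" for i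
    have ms: "monomial n \<alpha> (x(k := t)) = t ^ \<alpha> k * w \<alpha>" for \<alpha> t
      unfolding w_def by (rule mono_split[OF k])
    have ms0: "monomial n \<alpha> x = t0 ^ \<alpha> k * w \<alpha>" for \<alpha>
      using ms[of \<alpha> t0] by (simp add: t0_def)
    have ser: "(\<lambda>i. c i * t ^ i) sums f (x(k := t))" if t: "\<bar>t\<bar> < 1" for t
    proof -
      have xt: "\<forall>l<n. \<bar>(x(k := t)) l\<bar> < 1" using x t by auto
      define F where "F \<alpha> = b \<alpha> * monomial n \<alpha> (x(k := t))" for \<alpha>
      have hs: "(F has_sum f (x(k := t))) M" using rep[OF xt] unfolding F_def M_def .
      have sm: "F summable_on M" using PSb_summable[OF bnd] xt unfolding F_def M_def by blast
      have "((\<lambda>i. infsum F {\<alpha>\<in>M. \<alpha> k = i}) has_sum infsum F M) UNIV"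
        by (rule fiber_has_sum[OF sm])
      moreover have "infsum F M = f (x(k := t))" using hs by (simp add: infsumI)
      moreover have "infsum F {\<alpha>\<in>M. \<alpha> k = i} = c i * t ^ i" for i
      proof -
        have "infsum F {\<alpha>\<in>M. \<alpha> k = i} = infsum (\<lambda>\<alpha>. t ^ i * (b \<alpha> * w \<alpha>)) {\<alpha>\<in>M. \<alpha> k = i}"
          by (intro infsum_cong) (auto simp: F_def ms)
        also have "\<dots> = t ^ i * c i" by (simp add: infsum_cmult_right' c_def)
        finally show ?thesis by simp
      qed
      ultimately show ?thesis by (intro has_sum_imp_sums) simp
    qed
    define K0 where "K0 = (\<bar>t0\<bar> + 1) / 2"
    have K0: "\<bar>K0\<bar> < 1" "\<bar>t0\<bar> < \<bar>K0\<bar>" using t0 by (auto simp: K0_def)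
    have smK: "summable (\<lambda>i. c i * K0 ^ i)" using ser[OF K0(1)] by (rule sums_summable)
    have D: "((\<lambda>t. \<Sum>i. c i * t ^ i) has_field_derivative (\<Sum>i. diffs c i * t0 ^ i)) (at t0)"
      using termdiffs_strong[OF smK] K0 by simp
    have D2: "((\<lambda>t. f (x(k := t))) has_field_derivative (\<Sum>i. diffs c i * t0 ^ i)) (at t0)"
    proof (rule has_field_derivative_transform_within_open[OF D, of "ball 0 1"])
      show "t0 \<in> ball 0 1" using t0 by simp
      fix t :: real assume "t \<in> ball 0 1"
      hence "\<bar>t\<bar> < 1" by simp
      thus "(\<Sum>i. c i * t ^ i) = f (x(k := t))" using sums_unique[OF ser] by simp
    qed simp
    have pd: "partial_deriv k f x = (\<Sum>i. diffs c i * t0 ^ i)"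
      unfolding partial_deriv_def using DERIV_imp_deriv[OF D2] by (simp add: t0_def)
    define G where "G \<beta> = Dk k b \<beta> * monomial n \<beta> x" for \<beta>
    have smG: "G summable_on M" unfolding G_def M_def using PSb_summable[OF bnd'] x by blast
    have fibG: "((\<lambda>i. infsum G {\<beta>\<in>M. \<beta> k = i}) has_sum infsum G M) UNIV"
      by (rule fiber_has_sum[OF smG])
    have fibval: "infsum G {\<beta>\<in>M. \<beta> k = i} = diffs c i * t0 ^ i" for i
    proof -
      have inj: "inj_on up {\<beta>\<in>M. \<beta> k = i}"
      proof (rule inj_onI)
        fix \<beta> \<gamma> assume "up \<beta> = up \<gamma>"
        hence e: "\<And>l. up \<beta> l = up \<gamma> l" by simp
        show "\<beta> = \<gamma>"
        proof (rule ext)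
          fix l show "\<beta> l = \<gamma> l" using e[of l] by (cases "l = k") (auto simp: up_def)
        qed
      qed
      have img: "up ` {\<beta>\<in>M. \<beta> k = i} = {\<alpha>\<in>M. \<alpha> k = Suc i}"
      proof (intro equalityI subsetI)
        fix \<alpha> assume "\<alpha> \<in> up ` {\<beta>\<in>M. \<beta> k = i}"
        thus "\<alpha> \<in> {\<alpha>\<in>M. \<alpha> k = Suc i}" using upd_mi[OF k] by (auto simp: up_def M_def)
      next
        fix \<alpha> assume a: "\<alpha> \<in> {\<alpha>\<in>M. \<alpha> k = Suc i}"
        hence "\<alpha> = up (\<alpha>(k := i))" by (auto simp: up_def fun_eq_iff)
        moreover have "\<alpha>(k := i) \<in> {\<beta>\<in>M. \<beta> k = i}" using a k by (auto simp: M_def multi_indices_def)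
        ultimately show "\<alpha> \<in> up ` {\<beta>\<in>M. \<beta> k = i}" by blast
      qed
      have wup: "w (up \<beta>) = w \<beta>" for \<beta> unfolding w_def up_def by (intro prod.cong) auto
      have "infsum G {\<beta>\<in>M. \<beta> k = i} = infsum (\<lambda>\<beta>. (real (i + 1) * t0 ^ i) * ((\<lambda>\<alpha>. b \<alpha> * w \<alpha>) \<circ> up) \<beta>) {\<beta>\<in>M. \<beta> k = i}"
      proof (intro infsum_cong)
        fix \<beta> assume "\<beta> \<in> {\<beta>\<in>M. \<beta> k = i}"
        hence bi: "\<beta> k = i" by simp
        have "G \<beta> = real (\<beta> k + 1) * b (up \<beta>) * (t0 ^ \<beta> k * w \<beta>)"
          unfolding G_def Dk_def ms0 up_def by simp
        thus "G \<beta> = real (i + 1) * t0 ^ i * ((\<lambda>\<alpha>. b \<alpha> * w \<alpha>) \<circ> up) \<beta>"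
          using bi wup[of \<beta>] by (simp add: algebra_simps)
      qed
      also have "\<dots> = real (i + 1) * t0 ^ i * infsum ((\<lambda>\<alpha>. b \<alpha> * w \<alpha>) \<circ> up) {\<beta>\<in>M. \<beta> k = i}"
        by (rule infsum_cmult_right')
      also have "infsum ((\<lambda>\<alpha>. b \<alpha> * w \<alpha>) \<circ> up) {\<beta>\<in>M. \<beta> k = i} = c (Suc i)"
        unfolding c_def img[symmetric] by (rule infsum_reindex[OF inj, symmetric])
      finally show ?thesis by (simp add: diffs_def)
    qed
    have "(\<lambda>i. diffs c i * t0 ^ i) sums infsum G M"
      using fibG fibval by (intro has_sum_imp_sums) simp
    hence "infsum G M = partial_deriv k f x" using pd sums_unique by simp
    moreover have "(G has_sum infsum G M) M" using smG by simp
    ultimately show ?thesis unfolding G_def M_def by simp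
  qed
  thus ?thesis using bnd' unfolding PS_def by blast
qed

fun DL :: "nat list \<Rightarrow> ((nat\<Rightarrow>nat)\<Rightarrow>real) \<Rightarrow> (nat\<Rightarrow>nat) \<Rightarrow> real" where
  "DL [] b = b"
| "DL (k # ks) b = Dk k (DL ks b)"

lemma PS_iter: "PS n b f \<Longrightarrow> set L \<subseteq> {..<n} \<Longrightarrow> PS n (DL L b) (iter_partials L f)"
  by (induction L) (auto intro: PS_Dk)

lemma fact_prod_upd:
  fixes \<beta> :: "nat \<Rightarrow> nat" and k n :: nat
  assumes "k < n"
  shows "(\<Prod>l<n. (fact ((\<beta>(k := \<beta> k + 1)) l) :: real)) = real (\<beta> k + 1) * (\<Prod>l<n. fact (\<beta> l))"
proof -
  have "(\<Prod>l<n. (fact ((\<beta>(k := \<beta> k + 1)) l) :: real)) = fact ((\<beta>(k := \<beta> k + 1)) k) * (\<Prod>l\<in>{..<n}-{k}. fact ((\<beta>(k := \<beta> k + 1)) l))"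
    by (rule prod.remove) (use assms in auto)
  also have "(\<Prod>l\<in>{..<n}-{k}. (fact ((\<beta>(k := \<beta> k + 1)) l) :: real)) = (\<Prod>l\<in>{..<n}-{k}. fact (\<beta> l))"
    by (intro prod.cong) auto
  also have "(\<Prod>l<n. (fact (\<beta> l) :: real)) = fact (\<beta> k) * (\<Prod>l\<in>{..<n}-{k}. fact (\<beta> l))"
    by (rule prod.remove) (use assms in auto)
  ultimately show ?thesis by simp
qed

lemma DL_formula:
  "set L \<subseteq> {..<n} \<Longrightarrow>
   DL L b \<beta> * (\<Prod>l<n. fact (\<beta> l)) = b (\<lambda>l. \<beta> l + count_list L l) * (\<Prod>l<n. fact (\<beta> l + count_list L l))"
proof (induction L arbitrary: \<beta>)
  case Nil thus ?case by simp
next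
  case (Cons k L)
  hence k: "k < n" and L: "set L \<subseteq> {..<n}" by auto
  define \<beta>' where "\<beta>' = \<beta>(k := \<beta> k + 1)"
  have e: "(\<lambda>l. \<beta>' l + count_list L l) = (\<lambda>l. \<beta> l + count_list (k # L) l)"
    by (auto simp: \<beta>'_def fun_eq_iff)
  have "DL (k # L) b \<beta> * (\<Prod>l<n. fact (\<beta> l)) = DL L b \<beta>' * (real (\<beta> k + 1) * (\<Prod>l<n. fact (\<beta> l)))"
    by (simp add: Dk_def \<beta>'_def)
  also have "\<dots> = DL L b \<beta>' * (\<Prod>l<n. fact (\<beta>' l))"
    using fact_prod_upd[OF k, of \<beta>] by (simp add: \<beta>'_def)
  also have "\<dots> = b (\<lambda>l. \<beta>' l + count_list L l) * (\<Prod>l<n. fact (\<beta>' l + count_list L l))"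
    by (rule Cons.IH[OF L])
  also have "\<dots> = b (\<lambda>l. \<beta> l + count_list (k # L) l) * (\<Prod>l<n. fact (\<beta> l + count_list (k # L) l))"
    using e by (metis (no_types))
  finally show ?case .
qed

lemma monomial_zero: "\<alpha> \<in> multi_indices n \<Longrightarrow> monomial n \<alpha> (\<lambda>_. 0) = (if \<alpha> = (\<lambda>_. 0) then 1 else 0)"
  unfolding monomial_def multi_indices_def
  apply (auto simp: fun_eq_iff zero_power)
  subgoal for x by (cases "x < n") auto
  done

lemma PS_value0:
  assumes "PS n b f"
  shows "f (\<lambda>_. 0) = b (\<lambda>_. 0)"
proof -
  have "((\<lambda>\<alpha>. b \<alpha> * monomial n \<alpha> (\<lambda>_. 0)) has_sum f (\<lambda>_. 0)) (multi_indices n)"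
    using assms unfolding PS_def by auto
  moreover have "((\<lambda>\<alpha>. b \<alpha> * monomial n \<alpha> (\<lambda>_. 0)) has_sum f (\<lambda>_. 0)) (multi_indices n) \<longleftrightarrow>
     ((\<lambda>\<alpha>. b \<alpha> * monomial n \<alpha> (\<lambda>_. 0)) has_sum f (\<lambda>_. 0)) {\<lambda>_. 0}"
    by (rule has_sum_cong_neutral) (auto simp: monomial_zero multi_indices_def)
  ultimately have "((\<lambda>\<alpha>. b \<alpha> * monomial n \<alpha> (\<lambda>_. 0)) has_sum f (\<lambda>_. 0)) {\<lambda>_. 0}" by blast
  moreover have "((\<lambda>\<alpha>. b \<alpha> * monomial n \<alpha> (\<lambda>_. 0)) has_sum b (\<lambda>_. 0)) {\<lambda>_. 0}"
    using has_sum_finite[of "{\<lambda>_. 0}" "\<lambda>\<alpha>. b \<alpha> * monomial n \<alpha> (\<lambda>_. 0)"]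
    by (simp add: monomial_def)
  ultimately show ?thesis using has_sum_unique by blast
qed

lemma count_replicate: "count_list (replicate m x) y = (if x = y then m else 0)"
  by (induction m) auto

lemma count_mil: "count_list (multi_index_list n \<alpha>) l = (if l < n then \<alpha> l else 0)"
proof (induction n)
  case 0 thus ?case by (simp add: multi_index_list_def)
next
  case (Suc n)
  have "multi_index_list (Suc n) \<alpha> = multi_index_list n \<alpha> @ replicate (\<alpha> n) n"
    by (simp add: multi_index_list_def)
  thus ?case using Suc by (auto simp: count_replicate)
qed

lemma set_mil: "set (multi_index_list n \<alpha>) \<subseteq> {..<n}"
  by (auto simp: multi_index_list_def)

lemma PS_taylor:
  assumes "PS n b f" "\<alpha> \<in> multi_indices n"
  shows "taylor_coeff n f \<alpha> = b \<alpha>"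
proof -
  define L where "L = multi_index_list n \<alpha>"
  have L: "set L \<subseteq> {..<n}" by (simp add: L_def set_mil)
  have cnt: "(\<lambda>l. 0 + count_list L l) = \<alpha>"
    using assms(2) by (auto simp: L_def count_mil fun_eq_iff multi_indices_def)
  have "iter_partials L f (\<lambda>_. 0) = DL L b (\<lambda>_. 0)"
    by (rule PS_value0[OF PS_iter[OF assms(1) L]])
  also have "\<dots> = DL L b (\<lambda>_. 0) * (\<Prod>l<n. fact ((\<lambda>_. 0) l))" by simp
  also have "\<dots> = b \<alpha> * (\<Prod>l<n. fact (\<alpha> l))"
    using DL_formula[OF L, of b "\<lambda>_. 0"] cnt by simp
  finally show ?thesis unfolding taylor_coeff_def L_def by simp
qed



definition cmono :: "nat \<Rightarrow> (nat \<Rightarrow> nat) \<Rightarrow> (nat \<Rightarrow> complex) \<Rightarrow> complex" where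
  "cmono n \<alpha> v = (\<Prod>k<n. v k ^ \<alpha> k)"

definition Dm :: "nat \<Rightarrow> nat \<Rightarrow> (nat \<Rightarrow> nat) set" where
  "Dm n m = {\<alpha>\<in>multi_indices n. deg n \<alpha> = m}"

inductive hom :: "nat \<Rightarrow> nat \<Rightarrow> ((nat\<Rightarrow>complex)\<Rightarrow>complex) \<Rightarrow> bool" for n where
  hconst: "hom n 0 (\<lambda>v. c)"
| hzero: "hom n m (\<lambda>v. 0)"
| hvar: "hom n m f \<Longrightarrow> k < n \<Longrightarrow> hom n (Suc m) (\<lambda>v. v k * f v)"
| hadd: "hom n m f \<Longrightarrow> hom n m g \<Longrightarrow> hom n m (\<lambda>v. f v + g v)"

lemma hom_cmult: "hom n m f \<Longrightarrow> hom n m (\<lambda>v. c * f v)"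
proof (induction rule: hom.induct)
  case (hconst c') thus ?case using hom.hconst[of n "c * c'"] by simp
next
  case (hzero m) thus ?case using hom.hzero[of n m] by simp
next
  case (hvar m f k)
  have "hom n (Suc m) (\<lambda>v. v k * (c * f v))" by (rule hom.hvar[OF hvar.IH hvar.hyps(2)])
  thus ?case by (simp add: algebra_simps)
next
  case (hadd m f g)
  have "hom n m (\<lambda>v. c * f v + c * g v)" by (rule hom.hadd[OF hadd.IH])
  thus ?case by (simp add: algebra_simps)
qed

lemma hom_mult: "hom n a f \<Longrightarrow> hom n b g \<Longrightarrow> hom n (a + b) (\<lambda>v. f v * g v)"
proof (induction rule: hom.induct)
  case (hconst c) thus ?case using hom_cmult by simp
next
  case (hzero m) thus ?case using hom.hzero[of n "m + b"] by simp
next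
  case (hvar m f k)
  have "hom n (Suc (m + b)) (\<lambda>v. v k * (f v * g v))" by (rule hom.hvar[OF hvar.IH[OF hvar.prems] hvar.hyps(2)])
  thus ?case by (simp add: algebra_simps)
next
  case (hadd m f1 f2)
  have "hom n (m + b) (\<lambda>v. f1 v * g v + f2 v * g v)" by (rule hom.hadd[OF hadd.IH(1)[OF hadd.prems] hadd.IH(2)[OF hadd.prems]])
  thus ?case by (simp add: algebra_simps)
qed

lemma hom_sum: "finite I \<Longrightarrow> (\<And>i. i \<in> I \<Longrightarrow> hom n m (f i)) \<Longrightarrow> hom n m (\<lambda>v. \<Sum>i\<in>I. f i v)"
proof (induction I rule: finite_induct)
  case empty thus ?case using hom.hzero by simp
next
  case (insert x F)
  have "hom n m (\<lambda>v. f x v + (\<Sum>i\<in>F. f i v))"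
    by (rule hom.hadd) (use insert in auto)
  thus ?case using insert by simp
qed

lemma hom_pow: "k < n \<Longrightarrow> hom n i (\<lambda>v. v k ^ i)"
proof (induction i)
  case 0 thus ?case using hom.hconst[of n 1] by simp
next
  case (Suc i) thus ?case using hom.hvar[OF Suc.IH[OF Suc.prems] Suc.prems] by simp
qed

lemma finite_Dm: "finite (Dm n m)"
proof (rule finite_subset)
  show "Dm n m \<subseteq> {\<alpha>. \<forall>k. (k \<in> {..<n} \<longrightarrow> \<alpha> k \<in> {..m}) \<and> (k \<notin> {..<n} \<longrightarrow> \<alpha> k = 0)}"
    by (auto simp: Dm_def multi_indices_def le_deg)
  show "finite \<dots>" by (rule finite_set_of_finite_funs) auto
qed

lemma Dm0: "Dm n 0 = {\<lambda>_. 0}"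
  apply (auto simp: Dm_def multi_indices_def deg_def fun_eq_iff)
  subgoal for x y by (cases "y < n") auto
  done

lemma cmono_upd:
  assumes "k < n"
  shows "cmono n (\<alpha>(k := \<alpha> k + 1)) v = v k * cmono n \<alpha> v"
proof -
  have "cmono n (\<alpha>(k := \<alpha> k + 1)) v = (\<Prod>l\<in>{..<n}. v l ^ (\<alpha>(k := \<alpha> k + 1)) l)"
    by (simp only: cmono_def)
  also have "\<dots> = v k ^ (\<alpha>(k := \<alpha> k + 1)) k * (\<Prod>l\<in>{..<n}-{k}. v l ^ (\<alpha>(k := \<alpha> k + 1)) l)"
    by (rule prod.remove) (use assms in auto)
  also have "(\<alpha>(k := \<alpha> k + 1)) k = \<alpha> k + 1" by simp
  also have "(\<Prod>l\<in>{..<n}-{k}. v l ^ (\<alpha>(k := \<alpha> k + 1)) l) = (\<Prod>l\<in>{..<n}-{k}. v l ^ \<alpha> l)"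
    by (intro prod.cong) auto
  also have "v k ^ (\<alpha> k + 1) * (\<Prod>l\<in>{..<n}-{k}. v l ^ \<alpha> l) = v k * (v k ^ \<alpha> k * (\<Prod>l\<in>{..<n}-{k}. v l ^ \<alpha> l))"
    by (simp add: mult.assoc)
  also have "v k ^ \<alpha> k * (\<Prod>l\<in>{..<n}-{k}. v l ^ \<alpha> l) = cmono n \<alpha> v"
    unfolding cmono_def by (rule prod.remove[symmetric]) (use assms in auto)
  finally show ?thesis .
qed

lemma hom_rep: "hom n m f \<Longrightarrow> \<exists>a. \<forall>v. f v = (\<Sum>\<alpha>\<in>Dm n m. a \<alpha> * cmono n \<alpha> v)"
proof (induction rule: hom.induct)
  case (hconst c) thus ?case by (intro exI[of _ "\<lambda>_. c"]) (simp add: Dm0 cmono_def)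
next
  case (hzero m) thus ?case by (intro exI[of _ "\<lambda>_. 0"]) simp
next
  case (hvar m f k)
  then obtain a where a: "\<And>v. f v = (\<Sum>\<alpha>\<in>Dm n m. a \<alpha> * cmono n \<alpha> v)" by blast
  define up where "up \<beta> = \<beta>(k := \<beta> k + 1)" for \<beta> :: "nat \<Rightarrow> nat"
  define a' where "a' \<beta> = (if 0 < \<beta> k then a (\<beta>(k := \<beta> k - 1)) else 0)" for \<beta>
  have inj: "inj_on up (Dm n m)"
  proof (rule inj_onI)
    fix \<beta> \<gamma> assume "up \<beta> = up \<gamma>"
    hence e: "\<And>l. up \<beta> l = up \<gamma> l" by simp
    show "\<beta> = \<gamma>"
    proof (rule ext)
      fix l show "\<beta> l = \<gamma> l" using e[of l] by (cases "l = k") (auto simp: up_def)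
    qed
  qed
  have sub: "up ` Dm n m \<subseteq> Dm n (Suc m)"
    using upd_mi[OF hvar.hyps(2)] deg_upd[OF hvar.hyps(2)] by (auto simp: up_def Dm_def)
  have "\<exists>a. \<forall>v. v k * f v = (\<Sum>\<beta>\<in>Dm n (Suc m). a \<beta> * cmono n \<beta> v)"
  proof (intro exI allI)
    fix v
    have "v k * f v = (\<Sum>\<alpha>\<in>Dm n m. a \<alpha> * cmono n (up \<alpha>) v)"
      unfolding a sum_distrib_left up_def using cmono_upd[OF hvar.hyps(2)] by (simp add: algebra_simps)
    also have "\<dots> = (\<Sum>\<alpha>\<in>Dm n m. a' (up \<alpha>) * cmono n (up \<alpha>) v)"
      by (intro sum.cong) (auto simp: a'_def up_def)
    also have "\<dots> = (\<Sum>\<beta>\<in>up ` Dm n m. a' \<beta> * cmono n \<beta> v)"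
      by (rule sum.reindex[OF inj, symmetric, unfolded comp_def])
    also have "\<dots> = (\<Sum>\<beta>\<in>Dm n (Suc m). a' \<beta> * cmono n \<beta> v)"
    proof (rule sum.mono_neutral_left[OF finite_Dm sub])
      show "\<forall>\<beta>\<in>Dm n (Suc m) - up ` Dm n m. a' \<beta> * cmono n \<beta> v = 0"
      proof
        fix \<beta> assume b: "\<beta> \<in> Dm n (Suc m) - up ` Dm n m"
        show "a' \<beta> * cmono n \<beta> v = 0"
        proof (cases "0 < \<beta> k")
          case True
          define \<gamma> where "\<gamma> = \<beta>(k := \<beta> k - 1)"
          have "up \<gamma> = \<beta>" using True by (auto simp: up_def \<gamma>_def fun_eq_iff)
          moreover have "\<gamma> \<in> Dm n m"
          proof -
            have "\<gamma> \<in> multi_indices n" using b hvar.hyps(2) by (auto simp: \<gamma>_def Dm_def multi_indices_def)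
            moreover have "deg n (up \<gamma>) = deg n \<gamma> + 1" unfolding up_def by (rule deg_upd[OF hvar.hyps(2)])
            ultimately show ?thesis using b \<open>up \<gamma> = \<beta>\<close> by (auto simp: Dm_def)
          qed
          ultimately show ?thesis using b by blast
        qed (simp add: a'_def)
      qed
    qed
    finally show "v k * f v = (\<Sum>\<beta>\<in>Dm n (Suc m). a' \<beta> * cmono n \<beta> v)" .
  qed
  thus ?case .
next
  case (hadd m f g)
  then obtain a b where a: "\<And>v. f v = (\<Sum>\<alpha>\<in>Dm n m. a \<alpha> * cmono n \<alpha> v)"
    and b: "\<And>v. g v = (\<Sum>\<alpha>\<in>Dm n m. b \<alpha> * cmono n \<alpha> v)" by blast
  show ?case
    by (intro exI[of _ "\<lambda>\<alpha>. a \<alpha> + b \<alpha>"]) (simp add: a b algebra_simps sum.distrib)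
qed



lemma cis_eq_1_iff_int:
  "cis x = 1 \<longleftrightarrow> (\<exists>m::int. x = 2 * pi * m)"
  by (auto simp: cis_conv_exp exp_eq_1 algebra_simps)

lemma orth:
  fixes N p q :: nat
  assumes "p < N" "q < N"
  shows "(\<Sum>i<N. (cis (2 * pi / N) ^ i) ^ p * cnj (cis (2 * pi / N) ^ i) ^ q) = (if p = q then of_nat N else 0)"
proof -
  have N: "N > 0" using assms by auto
  define u where "u = cis (2 * pi * (real p - real q) / N)"
  have tm: "(cis (2 * pi / N) ^ i) ^ p * cnj (cis (2 * pi / N) ^ i) ^ q = u ^ i" for i
    by (simp add: u_def Complex.DeMoivre cis_cnj cis_mult algebra_simps diff_divide_distrib flip: power_mult complex_cnj_power)
  have su: "(\<Sum>i<N. (cis (2 * pi / N) ^ i) ^ p * cnj (cis (2 * pi / N) ^ i) ^ q) = (\<Sum>i<N. u ^ i)"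
    by (rule sum.cong[OF refl tm])
  have "(\<Sum>i<N. u ^ i) = (if p = q then of_nat N else 0)"
  proof (cases "p = q")
    case True thus ?thesis by (simp add: u_def)
  next
    case False
    have u1: "u \<noteq> 1"
    proof
      assume "u = 1"
      then obtain m :: int where m: "2 * pi * (real p - real q) / N = 2 * pi * m"
        unfolding u_def cis_eq_1_iff_int by blast
      hence "2 * pi * ((real p - real q) / N) = 2 * pi * m" by simp
      hence "(real p - real q) / N = m" using pi_gt_zero by (simp only: mult_cancel_left) simp
      hence "real p - real q = real N * m" using N by (simp add: field_simps)
      hence "real_of_int (int p - int q) = real_of_int (int N * m)" by simp
      hence e: "int p - int q = int N * m" by (simp only: of_int_eq_iff)
      have "m \<noteq> 0" using e False by auto
      hence "int N * 1 \<le> int N * \<bar>m\<bar>" by (intro mult_left_mono) auto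
      hence "\<bar>int N * m\<bar> \<ge> int N" by (simp add: abs_mult)
      thus False using e assms by linarith
    qed
    have uN: "u ^ N = 1"
    proof -
      have "u ^ N = cis (2 * pi * (real p - real q))" using N by (simp add: u_def Complex.DeMoivre)
      also have "\<dots> = 1" unfolding cis_eq_1_iff_int by (intro exI[of _ "int p - int q"]) simp
      finally show ?thesis .
    qed
    have "(\<Sum>i<N. u ^ i) = (1 - u ^ N) / (1 - u)" using u1 by (subst sum_gp_strict) auto
    thus ?thesis using False uN by simp
  qed
  with su show ?thesis by (rule trans)
qed

lemma coeff_bound:
  fixes a :: "(nat \<Rightarrow> nat) \<Rightarrow> complex"
  assumes rep: "\<And>v. f v = (\<Sum>\<alpha>\<in>Dm n m. a \<alpha> * cmono n \<alpha> v)"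
    and bnd: "\<And>v. (\<forall>k<n. norm (v k) = 1) \<Longrightarrow> norm (f v) \<le> B"
    and \<alpha>: "\<alpha> \<in> Dm n m"
  shows "norm (a \<alpha>) \<le> B"
proof -
  define N where "N = Suc m"
  define \<omega> where "\<omega> = cis (2 * pi / N)"
  define E where "E = PiE {..<n} (\<lambda>_. {..<N})"
  define V where "V e = (\<lambda>k. \<omega> ^ e k)" for e :: "nat \<Rightarrow> nat"
  define P where "P e = (\<Prod>k<n. cnj (\<omega> ^ e k) ^ \<alpha> k)" for e :: "nat \<Rightarrow> nat"
  define T where "T = (\<Sum>e\<in>E. f (V e) * P e)"
  have finE: "finite E" unfolding E_def by (intro finite_PiE) auto
  have cardE: "card E = N ^ n" unfolding E_def by (simp add: card_PiE)
  have nw: "norm (\<omega> ^ i) = 1" for i by (simp add: \<omega>_def norm_power)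
  have leN: "\<beta> k < N" if "\<beta> \<in> Dm n m" for \<beta> k
  proof (cases "k < n")
    case True thus ?thesis using that le_deg[OF True, of \<beta>] by (auto simp: Dm_def N_def)
  next
    case False thus ?thesis using that by (auto simp: Dm_def multi_indices_def N_def)
  qed
  have inner: "(\<Sum>e\<in>E. cmono n \<beta> (V e) * P e) = (if \<beta> = \<alpha> then of_nat N ^ n else 0)"
    if b: "\<beta> \<in> Dm n m" for \<beta>
  proof -
    have "(\<Sum>e\<in>E. cmono n \<beta> (V e) * P e) = (\<Sum>e\<in>E. \<Prod>k<n. (\<omega> ^ e k) ^ \<beta> k * cnj (\<omega> ^ e k) ^ \<alpha> k)"
      by (simp add: cmono_def P_def V_def prod.distrib)
    also have "\<dots> = (\<Prod>k<n. \<Sum>i<N. (\<omega> ^ i) ^ \<beta> k * cnj (\<omega> ^ i) ^ \<alpha> k)"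
      unfolding E_def by (rule prod_sum_PiE[symmetric]) auto
    also have "\<dots> = (\<Prod>k<n. if \<beta> k = \<alpha> k then of_nat N else 0)"
      unfolding \<omega>_def using leN[OF b] leN[OF \<alpha>] by (intro prod.cong refl orth)
    also have "\<dots> = (if \<beta> = \<alpha> then of_nat N ^ n else 0)"
    proof (cases "\<beta> = \<alpha>")
      case True thus ?thesis by simp
    next
      case False
      then obtain k where k: "\<beta> k \<noteq> \<alpha> k" by auto
      have "k < n"
      proof (rule ccontr)
        assume "\<not> k < n" thus False using k b \<alpha> by (auto simp: Dm_def multi_indices_def)
      qed
      thus ?thesis using False k by (intro trans[OF prod_zero]) (auto intro!: bexI[of _ k])
    qed
    finally show ?thesis .
  qed
  have "T = (\<Sum>e\<in>E. \<Sum>\<beta>\<in>Dm n m. a \<beta> * (cmono n \<beta> (V e) * P e))"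
    unfolding T_def rep by (simp add: sum_distrib_right mult.assoc)
  also have "\<dots> = (\<Sum>\<beta>\<in>Dm n m. a \<beta> * (\<Sum>e\<in>E. cmono n \<beta> (V e) * P e))"
    by (subst sum.swap) (simp add: sum_distrib_left)
  also have "\<dots> = (\<Sum>\<beta>\<in>Dm n m. a \<beta> * (if \<beta> = \<alpha> then of_nat N ^ n else 0))"
    by (intro sum.cong refl) (simp add: inner)
  also have "\<dots> = a \<alpha> * of_nat N ^ n"
    using \<alpha> finite_Dm[of n m] by (simp add: if_distrib cong: if_cong)
  finally have T1: "T = a \<alpha> * of_nat N ^ n" .
  have "norm T \<le> (\<Sum>e\<in>E. B)"
    unfolding T_def
  proof (rule sum_norm_le)
    fix e assume "e \<in> E"
    have "norm (P e) = 1" by (simp add: P_def prod_norm[symmetric] norm_power \<omega>_def)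
    moreover have "norm (f (V e)) \<le> B" by (rule bnd) (simp add: V_def nw)
    ultimately show "norm (f (V e) * P e) \<le> B" by (simp add: norm_mult)
  qed
  also have "\<dots> = real N ^ n * B" by (simp add: cardE)
  finally have "norm (a \<alpha>) * real N ^ n \<le> real N ^ n * B" by (simp add: T1 norm_mult norm_power)
  moreover have "real N ^ n > 0" by (simp add: N_def)
  ultimately show ?thesis by (simp add: mult.commute)
qed



definition Sf :: "nat \<Rightarrow> (nat\<Rightarrow>real) \<Rightarrow> (nat\<Rightarrow>complex) \<Rightarrow> complex \<Rightarrow> complex" where
  "Sf n \<xi> v t = (\<Sum>k<n. of_real (\<xi> k) * exp (t * v k))"

definition Gf :: "nat \<Rightarrow> nat \<Rightarrow> (nat\<Rightarrow>real) \<Rightarrow> (nat\<Rightarrow>complex) \<Rightarrow> complex \<Rightarrow> complex" where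
  "Gf n j \<xi> v = (\<lambda>t. exp (t * v j) * inverse (Sf n \<xi> v t))"

lemma hd_exp: "(deriv ^^ i) (\<lambda>t. exp (t * c)) = (\<lambda>t. c ^ i * exp (t * c :: complex))"
proof (induction i)
  case 0 thus ?case by simp
next
  case (Suc i)
  have "deriv (\<lambda>t. c ^ i * exp (t * c)) = (\<lambda>t. c ^ Suc i * exp (t * c))"
  proof
    fix t
    show "deriv (\<lambda>t. c ^ i * exp (t * c)) t = c ^ Suc i * exp (t * c)"
      by (rule DERIV_imp_deriv) (auto intro!: derivative_eq_intros)
  qed
  thus ?case using Suc by simp
qed

lemma hd_S: "(deriv ^^ i) (Sf n \<xi> v) = (\<lambda>t. \<Sum>k<n. of_real (\<xi> k) * v k ^ i * exp (t * v k))"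
proof (induction i)
  case 0 thus ?case by (simp add: Sf_def fun_eq_iff)
next
  case (Suc i)
  have "deriv (\<lambda>t. \<Sum>k<n. of_real (\<xi> k) * v k ^ i * exp (t * v k)) = (\<lambda>t. \<Sum>k<n. of_real (\<xi> k) * v k ^ Suc i * exp (t * v k))"
  proof
    fix t
    show "deriv (\<lambda>t. \<Sum>k<n. of_real (\<xi> k) * v k ^ i * exp (t * v k)) t = (\<Sum>k<n. of_real (\<xi> k) * v k ^ Suc i * exp (t * v k))"
      by (rule DERIV_imp_deriv) (auto intro!: derivative_eq_intros sum.cong simp: algebra_simps)
  qed
  thus ?case using Suc by simp
qed

lemma S_holo: "Sf n \<xi> v holomorphic_on A"
  unfolding Sf_def by (intro holomorphic_intros)

lemma S_cont: "continuous_on A (Sf n \<xi> v)"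
  by (rule holomorphic_on_imp_continuous_on[OF S_holo])

lemma open_U: "open {t. Sf n \<xi> v t \<noteq> 0}"
  by (rule open_Collect_neq[OF S_cont continuous_on_const])

lemma hd_S0: "(deriv ^^ i) (Sf n \<xi> v) 0 = (\<Sum>k<n. of_real (\<xi> k) * v k ^ i)"
  by (simp add: hd_S)

context
  fixes n j :: nat and \<xi> :: "nat \<Rightarrow> real"
  assumes nonneg: "\<And>k. k < n \<Longrightarrow> \<xi> k \<ge> 0"
    and sum1: "(\<Sum>k<n. \<xi> k) = 1"
    and jn: "j < n"
begin

lemma S0: "Sf n \<xi> v 0 = 1"
proof -
  have "Sf n \<xi> v 0 = of_real (\<Sum>k<n. \<xi> k)" by (simp add: Sf_def)
  thus ?thesis using sum1 by simp
qed

definition "H v m = (deriv ^^ m) (\<lambda>t. inverse (Sf n \<xi> v t)) 0"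

definition "U v = {t. Sf n \<xi> v t \<noteq> 0}"

lemma U: "open (U v)" "0 \<in> U v"
  using open_U S0 by (auto simp: U_def)

lemma inv_holo: "(\<lambda>t. inverse (Sf n \<xi> v t)) holomorphic_on U v"
  unfolding U_def by (intro holomorphic_intros S_holo) auto

lemma H_rec:
  assumes "m > 0"
  shows "H v m = - (\<Sum>i\<in>{1..m}. of_nat (m choose i) * (\<Sum>k<n. of_real (\<xi> k) * v k ^ i) * H v (m - i))"
proof -
  have ev: "eventually (\<lambda>t. Sf n \<xi> v t * inverse (Sf n \<xi> v t) = 1) (nhds 0)"
    using eventually_nhds_in_open[OF U(1)[of v] U(2)[of v]] by (rule eventually_mono) (auto simp: U_def)
  have "(deriv ^^ m) (\<lambda>t. Sf n \<xi> v t * inverse (Sf n \<xi> v t)) 0 = (deriv ^^ m) (\<lambda>t. 1) 0"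
    by (rule higher_deriv_cong_ev[OF ev refl])
  also have "\<dots> = 0" using assms by simp
  finally have z: "(deriv ^^ m) (\<lambda>t. Sf n \<xi> v t * inverse (Sf n \<xi> v t)) 0 = 0" .
  have "(deriv ^^ m) (\<lambda>t. Sf n \<xi> v t * inverse (Sf n \<xi> v t)) 0 =
        (\<Sum>i = 0..m. of_nat (m choose i) * (deriv ^^ i) (Sf n \<xi> v) 0 * H v (m - i))"
    unfolding H_def by (rule higher_deriv_mult[OF S_holo inv_holo U])
  also have "\<dots> = H v m + (\<Sum>i\<in>{1..m}. of_nat (m choose i) * (\<Sum>k<n. of_real (\<xi> k) * v k ^ i) * H v (m - i))"
    by (subst sum.atLeast_Suc_atMost) (auto simp: hd_S0 S0)
  finally show ?thesis using z by (simp add: add_eq_0_iff)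
qed

lemma hom_p: "hom n i (\<lambda>v. \<Sum>k<n. of_real (\<xi> k) * v k ^ i)"
  by (intro hom_sum hom_cmult hom_pow) auto

lemma hom_H: "hom n m (\<lambda>v. H v m)"
proof (induction m rule: less_induct)
  case (less m)
  show ?case
  proof (cases "m = 0")
    case True
    have "(\<lambda>v. H v m) = (\<lambda>v. 1)" using True by (simp add: H_def S0 fun_eq_iff)
    thus ?thesis using True hom.hconst by simp
  next
    case False
    have eq: "(\<lambda>v. H v m) = (\<lambda>v. (-1) * (\<Sum>i\<in>{1..m}. of_nat (m choose i) * ((\<Sum>k<n. of_real (\<xi> k) * v k ^ i) * H v (m - i))))"
      using H_rec False by (simp add: fun_eq_iff mult.assoc)
    have "hom n m (\<lambda>v. \<Sum>i\<in>{1..m}. of_nat (m choose i) * ((\<Sum>k<n. of_real (\<xi> k) * v k ^ i) * H v (m - i)))"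
    proof (intro hom_sum hom_cmult)
      fix i assume i: "i \<in> {1..m}"
      have "hom n (i + (m - i)) (\<lambda>v. (\<Sum>k<n. of_real (\<xi> k) * v k ^ i) * H v (m - i))"
        using i by (intro hom_mult hom_p less) auto
      thus "hom n m (\<lambda>v. (\<Sum>k<n. of_real (\<xi> k) * v k ^ i) * H v (m - i))" using i by simp
    qed simp
    thus ?thesis unfolding eq by (rule hom_cmult)
  qed
qed

lemma G_deriv: "(deriv ^^ m) (Gf n j \<xi> v) 0 = (\<Sum>i = 0..m. of_nat (m choose i) * v j ^ i * H v (m - i))"
proof -
  have "(deriv ^^ m) (Gf n j \<xi> v) 0 = (\<Sum>i = 0..m. of_nat (m choose i) * (deriv ^^ i) (\<lambda>t. exp (t * v j)) 0 * H v (m - i))"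
    unfolding Gf_def H_def by (rule higher_deriv_mult[OF _ inv_holo U]) (intro holomorphic_intros)
  thus ?thesis by (simp add: hd_exp)
qed

lemma hom_G: "hom n m (\<lambda>v. (deriv ^^ m) (Gf n j \<xi> v) 0 / fact m)"
proof -
  have "hom n m (\<lambda>v. \<Sum>i = 0..m. of_nat (m choose i) * (v j ^ i * H v (m - i)))"
  proof (intro hom_sum hom_cmult)
    fix i assume i: "i \<in> {0..m}"
    have "hom n (i + (m - i)) (\<lambda>v. v j ^ i * H v (m - i))"
      by (intro hom_mult hom_pow hom_H jn)
    thus "hom n m (\<lambda>v. v j ^ i * H v (m - i))" using i by simp
  qed simp
  hence h: "hom n m (\<lambda>v. inverse (fact m) * (\<Sum>i = 0..m. of_nat (m choose i) * (v j ^ i * H v (m - i))))"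
    by (rule hom_cmult)
  have eq: "(\<lambda>v. (deriv ^^ m) (Gf n j \<xi> v) 0 / fact m) = (\<lambda>v. inverse (fact m) * (\<Sum>i = 0..m. of_nat (m choose i) * (v j ^ i * H v (m - i))))"
    by (auto simp: fun_eq_iff G_deriv divide_inverse ac_simps)
  show ?thesis unfolding eq by (rule h)
qed

lemma cos32: "cos (3/2::real) > 0"
  using pi_gt3 by (intro cos_gt_zero) auto

lemma S_Re_bound:
  assumes v: "\<forall>k<n. norm (v k) \<le> 1" and t: "norm t \<le> 3/2"
  shows "Re (Sf n \<xi> v t) \<ge> exp (-3/2) * cos (3/2)"
proof -
  have tk: "\<xi> k * (exp (-3/2) * cos (3/2)) \<le> Re (of_real (\<xi> k) * exp (t * v k))" if k: "k < n" for k
  proof -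
    define z where "z = t * v k"
    have nz: "norm z \<le> 3/2"
    proof -
      have "norm z = norm t * norm (v k)" by (simp add: z_def norm_mult)
      also have "\<dots> \<le> 3/2 * 1" using v k t by (intro mult_mono) auto
      finally show ?thesis by simp
    qed
    have e: "exp (-3/2) \<le> exp (Re z)" using abs_Re_le_cmod[of z] nz by simp
    have "cos (3/2) \<le> cos \<bar>Im z\<bar>"
      using abs_Im_le_cmod[of z] nz pi_gt3 by (intro cos_monotone_0_pi_le) auto
    hence c: "cos (3/2) \<le> cos (Im z)" by simp
    have "exp (-3/2) * cos (3/2) \<le> exp (Re z) * cos (Im z)"
      using e c cos32 by (intro mult_mono) auto
    hence "\<xi> k * (exp (-3/2) * cos (3/2)) \<le> \<xi> k * (exp (Re z) * cos (Im z))"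
      using nonneg[OF k] by (intro mult_left_mono) auto
    thus ?thesis by (simp add: z_def Re_exp)
  qed
  have "(\<Sum>k<n. \<xi> k * (exp (-3/2) * cos (3/2))) = (\<Sum>k<n. \<xi> k) * (exp (-3/2) * cos (3/2::real))"
    by (rule sum_distrib_right[symmetric])
  hence "exp (-3/2) * cos (3/2) = (\<Sum>k<n. \<xi> k * (exp (-3/2) * cos (3/2)))"
    using sum1 by simp
  also have "\<dots> \<le> (\<Sum>k<n. Re (of_real (\<xi> k) * exp (t * v k)))"
    by (intro sum_mono tk) auto
  also have "\<dots> = Re (Sf n \<xi> v t)" by (simp add: Sf_def)
  finally show ?thesis .
qed

definition "B0 = exp (3/2) / (exp (-3/2) * cos (3/2::real))"

lemma G_bound:
  assumes v: "\<forall>k<n. norm (v k) \<le> 1" and t: "norm t \<le> 3/2"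
  shows "Sf n \<xi> v t \<noteq> 0" "norm (Gf n j \<xi> v t) \<le> B0"
proof -
  define c0 where "c0 = exp (-3/2) * cos (3/2::real)"
  have c0: "c0 > 0" using cos32 by (simp add: c0_def)
  have nS: "c0 \<le> norm (Sf n \<xi> v t)"
    using S_Re_bound[OF v t] complex_Re_le_cmod[of "Sf n \<xi> v t"] unfolding c0_def by linarith
  thus "Sf n \<xi> v t \<noteq> 0" using c0 by auto
  have ne: "norm (exp (t * v j)) \<le> exp (3/2)"
  proof -
    have "norm (t * v j) \<le> 3/2 * 1" unfolding norm_mult using v jn t by (intro mult_mono) auto
    hence "Re (t * v j) \<le> 3/2" using complex_Re_le_cmod[of "t * v j"] by linarith
    thus ?thesis by (simp only: norm_exp_eq_Re exp_le_cancel_iff)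
  qed
  have ni: "norm (inverse (Sf n \<xi> v t)) \<le> inverse c0"
    unfolding norm_inverse by (rule le_imp_inverse_le[OF nS c0])
  have "norm (Gf n j \<xi> v t) = norm (exp (t * v j)) * norm (inverse (Sf n \<xi> v t))"
    by (simp add: Gf_def norm_mult)
  also have "\<dots> \<le> exp (3/2) * inverse c0" using ne ni by (intro mult_mono) auto
  also have "\<dots> = B0" by (simp only: B0_def c0_def divide_inverse)
  finally show "norm (Gf n j \<xi> v t) \<le> B0" .
qed

lemma cball_U: "\<forall>k<n. norm (v k) \<le> 1 \<Longrightarrow> cball 0 (3/2) \<subseteq> U v"
  using G_bound(1) by (auto simp: U_def)

lemma G_holo: "Gf n j \<xi> v holomorphic_on U v"
  unfolding Gf_def by (intro holomorphic_on_mult inv_holo) (intro holomorphic_intros)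

lemma G_cauchy:
  assumes v: "\<forall>k<n. norm (v k) \<le> 1"
  shows "norm ((deriv ^^ m) (Gf n j \<xi> v) 0 / fact m) \<le> B0 / (3/2) ^ m"
proof -
  have sub: "ball 0 (3/2) \<subseteq> U v" using cball_U[OF v] by auto
  have "norm ((deriv ^^ m) (Gf n j \<xi> v) 0) \<le> fact m * B0 / (3/2) ^ m"
  proof (rule Cauchy_inequality)
    show "Gf n j \<xi> v holomorphic_on ball 0 (3/2)" using G_holo sub by (rule holomorphic_on_subset)
    show "continuous_on (cball 0 (3/2)) (Gf n j \<xi> v)"
      using holomorphic_on_imp_continuous_on[OF G_holo] cball_U[OF v] by (rule continuous_on_subset)
    fix x :: complex assume "norm (0 - x) = 3/2"
    thus "norm (Gf n j \<xi> v x) \<le> B0" using G_bound(2)[OF v] by simp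
  qed simp
  hence "norm ((deriv ^^ m) (Gf n j \<xi> v) 0) / fact m \<le> (fact m * B0 / (3/2) ^ m) / fact m"
    by (rule divide_right_mono) auto
  thus ?thesis by (simp add: norm_divide)
qed

lemma G_series:
  assumes v: "\<forall>k<n. norm (v k) \<le> 1"
  shows "(\<lambda>m. (deriv ^^ m) (Gf n j \<xi> v) 0 / fact m) sums Gf n j \<xi> v 1"
proof -
  have sub: "ball 0 (3/2) \<subseteq> U v" using cball_U[OF v] by auto
  have "(\<lambda>m. (deriv ^^ m) (Gf n j \<xi> v) 0 / fact m * (1 - 0) ^ m) sums Gf n j \<xi> v 1"
    by (rule holomorphic_power_series[OF holomorphic_on_subset[OF G_holo sub]]) simp
  thus ?thesis by simp
qed

lemma exists_A: "\<exists>A. \<forall>m v. (deriv ^^ m) (Gf n j \<xi> v) 0 / fact m = (\<Sum>\<alpha>\<in>Dm n m. A m \<alpha> * cmono n \<alpha> v)"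
proof -
  have "\<forall>m. \<exists>a. \<forall>v. (deriv ^^ m) (Gf n j \<xi> v) 0 / fact m = (\<Sum>\<alpha>\<in>Dm n m. a \<alpha> * cmono n \<alpha> v)"
    using hom_rep[OF hom_G] by blast
  thus ?thesis by (rule choice)
qed

definition "AA = (SOME A. \<forall>m v. (deriv ^^ m) (Gf n j \<xi> v) 0 / fact m = (\<Sum>\<alpha>\<in>Dm n m. A m \<alpha> * cmono n \<alpha> v))"

lemma AA_rep: "(deriv ^^ m) (Gf n j \<xi> v) 0 / fact m = (\<Sum>\<alpha>\<in>Dm n m. AA m \<alpha> * cmono n \<alpha> v)"
  using someI_ex[OF exists_A] unfolding AA_def by blast

lemma AA_bound: "\<alpha> \<in> Dm n m \<Longrightarrow> norm (AA m \<alpha>) \<le> B0 / (3/2) ^ m"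
  by (rule coeff_bound[OF AA_rep]) (rule G_cauchy, auto)

definition "bb \<alpha> = Re (AA (deg n \<alpha>) \<alpha>)"

lemma B0_pos: "B0 > 0" using cos32 by (simp add: B0_def)

lemma bb_bound: "\<alpha> \<in> multi_indices n \<Longrightarrow> \<bar>bb \<alpha>\<bar> \<le> B0 * (2/3) ^ deg n \<alpha>"
proof -
  assume a: "\<alpha> \<in> multi_indices n"
  have "\<bar>bb \<alpha>\<bar> \<le> norm (AA (deg n \<alpha>) \<alpha>)" unfolding bb_def by (rule abs_Re_le_cmod)
  also have "\<dots> \<le> B0 / (3/2) ^ deg n \<alpha>" using a by (intro AA_bound) (simp add: Dm_def)
  also have "\<dots> = B0 * (2/3) ^ deg n \<alpha>" by (simp add: power_divide field_simps)
  finally show ?thesis .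
qed

lemma rep_real:
  assumes x: "\<forall>l<n. \<bar>x l\<bar> \<le> 1"
  shows "((\<lambda>\<alpha>. bb \<alpha> * monomial n \<alpha> x) has_sum (exp (x j) / (\<Sum>k<n. \<xi> k * exp (x k)))) (multi_indices n)"
proof -
  define v where "v = (\<lambda>l. complex_of_real (x l))"
  have v: "\<forall>k<n. norm (v k) \<le> 1" using x by (simp add: v_def)
  define F where "F \<alpha> = bb \<alpha> * monomial n \<alpha> x" for \<alpha>
  have S1: "Sf n \<xi> v 1 = of_real (\<Sum>k<n. \<xi> k * exp (x k))"
    by (simp add: Sf_def v_def exp_of_real)
  have G1: "Gf n j \<xi> v 1 = of_real (exp (x j) / (\<Sum>k<n. \<xi> k * exp (x k)))"
    unfolding Gf_def S1 by (simp add: v_def exp_of_real divide_inverse of_real_inverse)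
  have cm: "cmono n \<alpha> v = of_real (monomial n \<alpha> x)" for \<alpha>
    by (simp add: cmono_def monomial_def v_def)
  have ReT: "Re ((deriv ^^ m) (Gf n j \<xi> v) 0 / fact m) = (\<Sum>\<alpha>\<in>Dm n m. F \<alpha>)" for m
  proof -
    have "Re ((deriv ^^ m) (Gf n j \<xi> v) 0 / fact m) = (\<Sum>\<alpha>\<in>Dm n m. Re (AA m \<alpha> * of_real (monomial n \<alpha> x)))"
      unfolding AA_rep cm by (simp add: Re_sum)
    also have "\<dots> = (\<Sum>\<alpha>\<in>Dm n m. F \<alpha>)"
      by (intro sum.cong refl) (auto simp: F_def bb_def Dm_def)
    finally show ?thesis .
  qed
  have ser: "(\<lambda>m. \<Sum>\<alpha>\<in>Dm n m. F \<alpha>) sums (exp (x j) / (\<Sum>k<n. \<xi> k * exp (x k)))"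
    using sums_Re[OF G_series[OF v]] unfolding G1 ReT by simp
  have smF: "F summable_on multi_indices n"
  proof -
    have "(\<lambda>\<alpha>. B0 * (2/3) ^ deg n \<alpha>) summable_on multi_indices n"
      by (intro summable_on_cmult_right geom_summable) auto
    moreover have "\<bar>F \<alpha>\<bar> \<le> B0 * (2/3) ^ deg n \<alpha>" if "\<alpha> \<in> multi_indices n" for \<alpha>
    proof -
      have m1: "\<bar>monomial n \<alpha> x\<bar> \<le> 1" using abs_monomial_le[of n x 1 \<alpha>] x by simp
      have "\<bar>F \<alpha>\<bar> = \<bar>bb \<alpha>\<bar> * \<bar>monomial n \<alpha> x\<bar>" by (simp add: F_def abs_mult)
      also have "\<dots> \<le> B0 * (2/3) ^ deg n \<alpha> * 1"
        using bb_bound[OF that] m1 by (intro mult_mono) auto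
      finally show ?thesis by simp
    qed
    ultimately have "(\<lambda>\<alpha>. \<bar>F \<alpha>\<bar>) summable_on multi_indices n"
      by (rule summable_on_comparison_test) auto
    thus ?thesis using summable_on_iff_abs_summable_on_real[of F] by simp
  qed
  have "((\<lambda>m. infsum F {\<alpha>\<in>multi_indices n. deg n \<alpha> = m}) has_sum infsum F (multi_indices n)) UNIV"
    by (rule fiber_has_sum[OF smF])
  hence "(\<lambda>m. \<Sum>\<alpha>\<in>Dm n m. F \<alpha>) sums infsum F (multi_indices n)"
    by (intro has_sum_imp_sums) (simp add: Dm_def[symmetric] finite_Dm)
  hence "infsum F (multi_indices n) = exp (x j) / (\<Sum>k<n. \<xi> k * exp (x k))"
    using ser sums_unique2 by blast
  moreover have "(F has_sum infsum F (multi_indices n)) (multi_indices n)" using smF by simp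
  ultimately have "(F has_sum exp (x j) / (\<Sum>k<n. \<xi> k * exp (x k))) (multi_indices n)" by simp
  moreover have "((\<lambda>\<alpha>. bb \<alpha> * monomial n \<alpha> x) has_sum exp (x j) / (\<Sum>k<n. \<xi> k * exp (x k))) (multi_indices n)
     \<longleftrightarrow> (F has_sum exp (x j) / (\<Sum>k<n. \<xi> k * exp (x k))) (multi_indices n)"
    by (rule has_sum_cong) (simp add: F_def)
  ultimately show ?thesis by simp
qed

lemma PS_phi: "PS n bb (\<lambda>z. exp (z j) / (\<Sum>k<n. \<xi> k * exp (z k)))"
  unfolding PS_def
proof (intro conjI allI impI)
  fix x :: "nat \<Rightarrow> real" assume "\<forall>l<n. \<bar>x l\<bar> < 1"
  hence "\<forall>l<n. \<bar>x l\<bar> \<le> 1" by auto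
  thus "((\<lambda>\<alpha>. bb \<alpha> * monomial n \<alpha> x) has_sum exp (x j) / (\<Sum>k<n. \<xi> k * exp (x k))) (multi_indices n)"
    by (rule rep_real)
next
  show "PSb n bb" unfolding PSb_def
  proof (intro allI impI exI ballI)
    fix r :: real and \<alpha> assume r: "0 \<le> r \<and> r < 1" and a: "\<alpha> \<in> multi_indices n"
    have "\<bar>bb \<alpha>\<bar> * r ^ deg n \<alpha> \<le> (B0 * (2/3) ^ deg n \<alpha>) * 1"
      using bb_bound[OF a] r by (intro mult_mono power_le_one) auto
    also have "\<dots> \<le> B0 * 1"
    proof -
      have "(2/3::real) ^ deg n \<alpha> \<le> 1" by (rule power_le_one) auto
      hence "B0 * (2/3) ^ deg n \<alpha> \<le> B0 * 1" using B0_pos by (intro mult_left_mono) auto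
      thus ?thesis by simp
    qed
    finally show "\<bar>bb \<alpha>\<bar> * r ^ deg n \<alpha> \<le> B0" by simp
  qed
qed

end

theorem lemmaB7:
  fixes n j :: nat and \<xi> :: "nat \<Rightarrow> real" and \<phi> :: "(nat \<Rightarrow> real) \<Rightarrow> real"
  assumes nonneg: "\<And>k. k < n \<Longrightarrow> \<xi> k \<ge> 0"
    and sum1: "(\<Sum>k<n. \<xi> k) = 1"
    and j: "j < n"
    and phi: "\<phi> = (\<lambda>z. exp (z j) / (\<Sum>k<n. \<xi> k * exp (z k)))"
  shows "\<forall>z. (\<forall>k<n. \<bar>z k\<bar> \<le> 1) \<longrightarrow>
           ((\<lambda>\<alpha>. taylor_coeff n \<phi> \<alpha> * monomial n \<alpha> z) has_sum \<phi> z) (multi_indices n)"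
proof (intro allI impI)
  fix z :: "nat \<Rightarrow> real" assume z: "\<forall>k<n. \<bar>z k\<bar> \<le> 1"
  have PS: "PS n (bb n j \<xi>) \<phi>" unfolding phi by (rule PS_phi[OF nonneg sum1 j])
  have "((\<lambda>\<alpha>. bb n j \<xi> \<alpha> * monomial n \<alpha> z) has_sum \<phi> z) (multi_indices n)"
    unfolding phi using rep_real[OF nonneg sum1 j z] by simp
  moreover have "taylor_coeff n \<phi> \<alpha> * monomial n \<alpha> z = bb n j \<xi> \<alpha> * monomial n \<alpha> z"
    if "\<alpha> \<in> multi_indices n" for \<alpha>
    using PS_taylor[OF PS that] by simp
  ultimately show "((\<lambda>\<alpha>. taylor_coeff n \<phi> \<alpha> * monomial n \<alpha> z) has_sum \<phi> z) (multi_indices n)"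
    using has_sum_cong by (metis (no_types, lifting))
qed

end
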